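(* Let $(u_{k,\ell})_{k,\ell\in\mathbb Z_q}$ be as in the finite-spin model with $u=\min_{k\ne\ell}u_{k,\ell}>0$ and $U=\max_{k,\ell}u_{k,\ell}$, and let $d_{\max}\in\mathbb N_0$. Put $d(u,U,d_{\max})=2+\lfloor d_{\max}(u+U)/u\rfloor$. Then for every $d\ge d(u,U,d_{\max})$, every $\omega^0\in\mathbb Z_q^V$ whose set of broken edges $D$ satisfies $d_D\le d_{\max}$ is stable for the finite-spin model on $\mathcal T^d$, with stability constant $c=(d-1)u-d_{\max}(u+U)>0$.
   Context: $\mathcal T^d=(V,E)$ is the Cayley tree of order $d$ (every vertex has $d+1$ neighbours). Finite-spin model: spins in $\mathbb Z_q=\{0,\dots,q-1\}$, edge energy $\Phi(\omega_v,\omega_w)=u_{\omega_v,\omega_w}$ with $u_{k,\ell}\ge0$, $u_{k,k}=0$. Broken edges of $\omega^0$: $D=\{\{v,w\}\in E:\omega^0_v\ne\omega^0_w\}$; $d_D(v)$ is the number of edges of $D$ incident to $v$, $d_D=\max_v d_D(v)$. For $\omega,\omega^0$ differing at finitely many sites, $H(\omega)-H(\omega^0)=\sum_{\{v,w\}\in E}(\Phi(\omega_v,\omega_w)-\Phi(\omega^0_v,\omega^0_w))$. A configuration $\omega^0$ is stable with stability constant $c>0$ if for all $\omega$ differing from $\omega^0$ at finitely many sites, $H(\omega)-H(\omega^0)\ge c\sum_v\mathbf 1_{\omega_v\ne\omega^0_v}$. *)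

theory Defs
  imports Main Complex_Main
begin

text \<open>Cayley tree of order d: vertices are reduced words over the alphabet {0..d}
  (no two consecutive equal letters), i.e. the Cayley graph of the free product of
  d+1 copies of Z_2. The root [] has d+1 children; every other vertex has one parent
  and d children, so every vertex has d+1 neighbours.\<close>

definition tree_V :: "nat \<Rightarrow> nat list set" where
  "tree_V d = {xs. (\<forall>x\<in>set xs. x \<le> d) \<and> (\<forall>i. Suc i < length xs \<longrightarrow> xs ! i \<noteq> xs ! Suc i)}"

text \<open>Each (undirected) edge is listed exactly once, as the pair (parent, child).\<close>
definition tree_E :: "nat \<Rightarrow> (nat list \<times> nat list) set" where
  "tree_E d = {(v, v @ [a]) | v a. v \<in> tree_V d \<and> a \<le> d \<and> (v = [] \<or> last v \<noteq> a)}"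

text \<open>Spins in Z_q = {0..<q}; edge energy Phi(k,l) = u k l.\<close>
definition config :: "nat \<Rightarrow> nat \<Rightarrow> (nat list \<Rightarrow> nat) \<Rightarrow> bool" where
  "config d q \<omega> \<longleftrightarrow> (\<forall>v\<in>tree_V d. \<omega> v < q)"

definition diff_set :: "nat \<Rightarrow> (nat list \<Rightarrow> nat) \<Rightarrow> (nat list \<Rightarrow> nat) \<Rightarrow> nat list set" where
  "diff_set d \<omega> \<omega>0 = {v\<in>tree_V d. \<omega> v \<noteq> \<omega>0 v}"

text \<open>H(omega) - H(omega0): the sum over all edges of the energy differences; all terms
  vanish except on edges meeting the (finite) set of differing sites, so the sum is
  taken over that finite set of edges.\<close>
definition Hdiff :: "nat \<Rightarrow> (nat \<Rightarrow> nat \<Rightarrow> real) \<Rightarrow> (nat list \<Rightarrow> nat) \<Rightarrow> (nat list \<Rightarrow> nat) \<Rightarrow> real" where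
  "Hdiff d u \<omega> \<omega>0 =
     (\<Sum>e\<in>{e\<in>tree_E d. \<omega> (fst e) \<noteq> \<omega>0 (fst e) \<or> \<omega> (snd e) \<noteq> \<omega>0 (snd e)}.
        u (\<omega> (fst e)) (\<omega> (snd e)) - u (\<omega>0 (fst e)) (\<omega>0 (snd e)))"

definition broken_deg :: "nat \<Rightarrow> (nat list \<Rightarrow> nat) \<Rightarrow> nat list \<Rightarrow> nat" where
  "broken_deg d \<omega>0 v = card {e\<in>tree_E d. (fst e = v \<or> snd e = v) \<and> \<omega>0 (fst e) \<noteq> \<omega>0 (snd e)}"

definition stable_with :: "nat \<Rightarrow> nat \<Rightarrow> (nat \<Rightarrow> nat \<Rightarrow> real) \<Rightarrow> (nat list \<Rightarrow> nat) \<Rightarrow> real \<Rightarrow> bool" where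
  "stable_with d q u \<omega>0 c \<longleftrightarrow> c > 0 \<and>
     (\<forall>\<omega>. config d q \<omega> \<and> finite (diff_set d \<omega> \<omega>0) \<longrightarrow>
        Hdiff d u \<omega> \<omega>0 \<ge> c * real (card (diff_set d \<omega> \<omega>0)))"

definition u_min :: "nat \<Rightarrow> (nat \<Rightarrow> nat \<Rightarrow> real) \<Rightarrow> real" where
  "u_min q u = Min {u k l | k l. k < q \<and> l < q \<and> k \<noteq> l}"

definition u_max :: "nat \<Rightarrow> (nat \<Rightarrow> nat \<Rightarrow> real) \<Rightarrow> real" where
  "u_max q u = Max {u k l | k l. k < q \<and> l < q}"

end

theory Submission
  imports Defs
begin

lemma tree_E_mem:
  assumes "e \<in> tree_E d"
  shows "fst e \<in> tree_V d \<and> snd e \<in> tree_V d \<and> (\<exists>a. snd e = fst e @ [a])"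
proof -
  obtain v a where e: "e = (v, v @ [a])" and v: "v \<in> tree_V d" and a: "a \<le> d"
    and l: "v = [] \<or> last v \<noteq> a"
    using assms unfolding tree_E_def by blast
  have "v @ [a] \<in> tree_V d"
    unfolding tree_V_def
  proof (intro CollectI conjI allI impI)
    show "\<forall>x\<in>set (v @ [a]). x \<le> d" using v a unfolding tree_V_def by auto
  next
    fix i assume i: "Suc i < length (v @ [a])"
    show "(v @ [a]) ! i \<noteq> (v @ [a]) ! Suc i"
    proof (cases "Suc i < length v")
      case True
      then show ?thesis using v unfolding tree_V_def by (simp add: nth_append)
    next
      case False
      then have si: "Suc i = length v" using i by simp
      then have "v \<noteq> []" by auto
      have ii: "i = length v - 1" using si by simp
      then have "last v = v ! i" using \<open>v \<noteq> []\<close> by (simp add: last_conv_nth)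
      moreover have "(v @ [a]) ! i = v ! i" using si by (simp add: nth_append)
      moreover have "(v @ [a]) ! Suc i = a" using si by (simp add: nth_append)
      ultimately show ?thesis using l \<open>v \<noteq> []\<close> by simp
    qed
  qed
  then show ?thesis using e v by simp
qed

lemma tE: "e \<in> tree_E d \<Longrightarrow> \<exists>w a. e = (w, w @ [a]) \<and> a \<le> d"
  unfolding tree_E_def by blast
lemma incident_finite: "finite {e\<in>tree_E d. fst e = v \<or> snd e = v}"
proof (rule finite_subset)
  show "{e\<in>tree_E d. fst e = v \<or> snd e = v} \<subseteq> (\<lambda>a. (v, v @ [a])) ` {..d} \<union> {(butlast v, v)}"
  proof
    fix e assume "e \<in> {e\<in>tree_E d. fst e = v \<or> snd e = v}"
    then have e1: "e \<in> tree_E d" and h: "fst e = v \<or> snd e = v" by auto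
    obtain w a where e: "e = (w, w @ [a])" "a \<le> d" using tE[OF e1] by blast
    show "e \<in> (\<lambda>a. (v, v @ [a])) ` {..d} \<union> {(butlast v, v)}"
    proof (cases "w = v")
      case True then show ?thesis using e by auto
    next
      case False then have "w @ [a] = v" using h e by simp
      then have "e = (butlast v, v)" using e by auto
      then show ?thesis by simp
    qed
  qed
qed auto

lemma snd_inj: "inj_on snd (tree_E d)"
proof (rule inj_onI)
  fix x y assume x: "x \<in> tree_E d" and y: "y \<in> tree_E d" and s: "snd x = snd y"
  obtain a where a: "snd x = fst x @ [a]" using tree_E_mem[OF x] by blast
  obtain b where b: "snd y = fst y @ [b]" using tree_E_mem[OF y] by blast
  have "fst x = butlast (snd x)" using a by simp
  also have "\<dots> = fst y" using s b by simp
  finally show "x = y" using s by (simp add: prod_eq_iff)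
qed

theorem mainTheorem5:
  fixes q :: nat and u :: "nat \<Rightarrow> nat \<Rightarrow> real" and dmax d :: nat
    and \<omega>0 :: "nat list \<Rightarrow> nat"
  assumes "q \<ge> 2"
    and "\<And>k l. k < q \<Longrightarrow> l < q \<Longrightarrow> u k l \<ge> 0"
    and "\<And>k. k < q \<Longrightarrow> u k k = 0"
    and "u_min q u > 0"
    and "real d \<ge> 2 + of_int \<lfloor>real dmax * (u_min q u + u_max q u) / u_min q u\<rfloor>"
    and "config d q \<omega>0"
    and "\<And>v. v \<in> tree_V d \<Longrightarrow> broken_deg d \<omega>0 v \<le> dmax"
  shows "stable_with d q u \<omega>0 ((real d - 1) * u_min q u - real dmax * (u_min q u + u_max q u))"
proof -
  let ?u = "u_min q u" and ?U = "u_max q u"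
  have fin1: "finite {u k l | k l. k < q \<and> l < q \<and> k \<noteq> l}"
    by (rule finite_subset[of _ "(\<lambda>(k,l). u k l) ` ({..<q}\<times>{..<q})"]) auto
  have fin2: "finite {u k l | k l. k < q \<and> l < q}"
    by (rule finite_subset[of _ "(\<lambda>(k,l). u k l) ` ({..<q}\<times>{..<q})"]) auto
  have umin: "?u \<le> u k l" if "k < q" "l < q" "k \<noteq> l" for k l
    unfolding u_min_def by (rule Min_le[OF fin1]) (use that in blast)
  have umax: "u k l \<le> ?U" if "k < q" "l < q" for k l
    unfolding u_max_def by (rule Max_ge[OF fin2]) (use that in blast)
  have Upos: "?U \<ge> 0" using umax[of 0 0] assms(1,3) by force
  have upos: "?u > 0" by (rule assms(4))
  define x where "x = real dmax * (?u + ?U) / ?u"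
  have "x < of_int \<lfloor>x\<rfloor> + 1" by (rule real_of_int_floor_add_one_gt)
  then have "x < real d - 1" using assms(5) unfolding x_def by linarith
  then have "real dmax * (?u + ?U) < (real d - 1) * ?u"
    unfolding x_def using upos by (simp add: pos_divide_less_eq)
  then have cpos: "(real d - 1) * ?u - real dmax * (?u + ?U) > 0" by linarith
  show ?thesis
    unfolding stable_with_def
  proof (intro conjI allI impI)
    show "(real d - 1) * ?u - real dmax * (?u + ?U) > 0" by (rule cpos)
  next
    fix \<omega> assume h: "config d q \<omega> \<and> finite (diff_set d \<omega> \<omega>0)"
    define S where "S = diff_set d \<omega> \<omega>0"
    have finS: "finite S" using h S_def by simp
    have SV: "S \<subseteq> tree_V d" unfolding S_def diff_set_def by auto
    have cw: "\<And>v. v \<in> tree_V d \<Longrightarrow> \<omega> v < q" using h unfolding config_def by auto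
    have cw0: "\<And>v. v \<in> tree_V d \<Longrightarrow> \<omega>0 v < q" using assms(6) unfolding config_def by auto
    define T where "T = {e\<in>tree_E d. \<omega> (fst e) \<noteq> \<omega>0 (fst e) \<or> \<omega> (snd e) \<noteq> \<omega>0 (snd e)}"
    have T_eq: "T = {e\<in>tree_E d. fst e \<in> S \<or> snd e \<in> S}"
      unfolding T_def S_def diff_set_def using tree_E_mem by blast
    have finT: "finite T"
    proof (rule finite_subset)
      show "T \<subseteq> (\<Union>v\<in>S. {e\<in>tree_E d. fst e = v \<or> snd e = v})" unfolding T_eq by blast
      show "finite (\<Union>v\<in>S. {e\<in>tree_E d. fst e = v \<or> snd e = v})"
        using finS incident_finite by blast
    qed
    define F where "F = {e\<in>tree_E d. fst e \<in> S}"
    define I where "I = {e\<in>tree_E d. fst e \<in> S \<and> snd e \<in> S}"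
    define Bnd where "Bnd = F - I"
    define Br where "Br = {e\<in>tree_E d. \<omega>0 (fst e) \<noteq> \<omega>0 (snd e)}"
    have finF: "finite F" using finT unfolding F_def T_eq by (rule finite_subset[rotated]) blast
    have IF: "I \<subseteq> F" unfolding I_def F_def by blast
    have BT: "Bnd \<subseteq> T" unfolding Bnd_def F_def T_eq by blast
    define G where "G = Sigma S (\<lambda>v. {..d} - {last v})"
    have cardG: "card G = (\<Sum>v\<in>S. card ({..d} - {last v}))"
      unfolding G_def by (rule card_SigmaI) (use finS in auto)
    have "(\<Sum>v\<in>S. d) \<le> (\<Sum>v\<in>S. card ({..d} - {last v}))"
      by (rule sum_mono) (simp add: card_Diff_singleton_if)
    then have G1: "d * card S \<le> card G" using cardG by (simp add: mult.commute)
    have "card G \<le> card F"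
    proof (rule card_inj_on_le[OF _ _ finF])
      show "inj_on (\<lambda>(v,a). (v, v @ [a])) G" by (rule inj_onI) auto
      show "(\<lambda>(v,a). (v, v @ [a])) ` G \<subseteq> F"
        unfolding G_def F_def tree_E_def using SV by auto
    qed
    then have F1: "d * card S \<le> card F" using G1 by simp
    have I1: "card I \<le> card S"
    proof (rule card_inj_on_le[OF _ _ finS])
      show "inj_on snd I" using snd_inj by (rule inj_on_subset) (auto simp: I_def)
      show "snd ` I \<subseteq> S" unfolding I_def by auto
    qed
    have "card Bnd = card F - card I" unfolding Bnd_def
      using card_Diff_subset[OF finite_subset[OF IF finF] IF] .
    moreover have "card I \<le> card F" using card_mono[OF finF IF] .
    ultimately have B1: "card Bnd + card S \<ge> d * card S" using F1 I1 by linarith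
    have finInc: "finite {e\<in>tree_E d. (fst e = v \<or> snd e = v) \<and> \<omega>0 (fst e) \<noteq> \<omega>0 (snd e)}" for v
      using incident_finite[of d v] by (rule finite_subset[rotated]) blast
    have "T \<inter> Br \<subseteq> (\<Union>v\<in>S. {e\<in>tree_E d. (fst e = v \<or> snd e = v) \<and> \<omega>0 (fst e) \<noteq> \<omega>0 (snd e)})"
      unfolding T_eq Br_def by blast
    then have "card (T \<inter> Br) \<le> card (\<Union>v\<in>S. {e\<in>tree_E d. (fst e = v \<or> snd e = v) \<and> \<omega>0 (fst e) \<noteq> \<omega>0 (snd e)})"
      by (rule card_mono[rotated]) (rule finite_UN_I[OF finS finInc])
    also have "\<dots> \<le> (\<Sum>v\<in>S. broken_deg d \<omega>0 v)"
      unfolding broken_deg_def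
      by (rule card_UN_le[OF finS])
    also have "\<dots> \<le> (\<Sum>v\<in>S. dmax)" by (rule sum_mono) (use assms(7) SV in auto)
    finally have K1: "card (T \<inter> Br) \<le> dmax * card S" by (simp add: mult.commute)
    have pw: "u (\<omega> (fst e)) (\<omega> (snd e)) - u (\<omega>0 (fst e)) (\<omega>0 (snd e))
       \<ge> (if e \<in> Bnd then ?u else 0) - (if e \<in> Br then ?u + ?U else 0)" if eT: "e \<in> T" for e
    proof -
      obtain a b where e: "e = (a, b)" by (cases e)
      have eE: "e \<in> tree_E d" using eT T_def by simp
      have ab: "a \<in> tree_V d" "b \<in> tree_V d" using tree_E_mem[OF eE] e by auto
      have q: "\<omega> a < q" "\<omega> b < q" "\<omega>0 a < q" "\<omega>0 b < q" using ab cw cw0 by auto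
      have p1: "u (\<omega> a) (\<omega> b) \<ge> 0" using assms(2) q by auto
      have p2: "u (\<omega>0 a) (\<omega>0 b) \<le> ?U" using umax q by auto
      have p3: "\<omega>0 a = \<omega>0 b \<Longrightarrow> u (\<omega>0 a) (\<omega>0 b) = 0" using assms(3) q by auto
      have p4: "e \<in> Bnd \<Longrightarrow> \<omega>0 a = \<omega>0 b \<Longrightarrow> u (\<omega> a) (\<omega> b) \<ge> ?u"
      proof -
        assume "e \<in> Bnd" "\<omega>0 a = \<omega>0 b"
        then have "a \<in> S" "b \<notin> S" unfolding Bnd_def F_def I_def e by auto
        then have "\<omega> a \<noteq> \<omega> b" using ab \<open>\<omega>0 a = \<omega>0 b\<close> unfolding S_def diff_set_def by auto
        then show ?thesis using umin q by auto
      qed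
      have br: "e \<in> Br \<longleftrightarrow> \<omega>0 a \<noteq> \<omega>0 b" using eE e Br_def by auto
      have fe: "fst e = a" "snd e = b" using e by auto
      show ?thesis
      proof (cases "e \<in> Br")
        case True
        then have "u (\<omega>0 a) (\<omega>0 b) \<le> ?U" using p2 by simp
        moreover have "(if e \<in> Bnd then ?u else 0) \<le> ?u" using upos by simp
        ultimately show ?thesis unfolding fe using True p1 by simp
      next
        case False
        then have z: "u (\<omega>0 a) (\<omega>0 b) = 0" and eq: "\<omega>0 a = \<omega>0 b" using br p3 by auto
        show ?thesis
        proof (cases "e \<in> Bnd")
          case True
          then show ?thesis unfolding fe using False z p4[OF True eq] by simp
        next
          case F2: False
          then show ?thesis unfolding fe using False z p1 by simp
        qed
      qed
    qed
    have "Hdiff d u \<omega> \<omega>0 = (\<Sum>e\<in>T. u (\<omega> (fst e)) (\<omega> (snd e)) - u (\<omega>0 (fst e)) (\<omega>0 (snd e)))"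
      unfolding Hdiff_def T_def ..
    also have "\<dots> \<ge> (\<Sum>e\<in>T. (if e \<in> Bnd then ?u else 0) - (if e \<in> Br then ?u + ?U else 0))"
      by (rule sum_mono) (rule pw)
    finally have H1: "Hdiff d u \<omega> \<omega>0 \<ge> (\<Sum>e\<in>T. (if e \<in> Bnd then ?u else 0)) - (\<Sum>e\<in>T. (if e \<in> Br then ?u + ?U else 0))"
      by (simp add: sum_subtractf)
    have s1: "(\<Sum>e\<in>T. (if e \<in> Bnd then ?u else 0)) = ?u * real (card Bnd)"
    proof -
      have "(\<Sum>e\<in>T. (if e \<in> Bnd then ?u else 0)) = sum (\<lambda>_. ?u) (T \<inter> Bnd)"
        by (rule sum.inter_restrict[OF finT, symmetric])
      also have "T \<inter> Bnd = Bnd" using BT by blast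
      finally show ?thesis by simp
    qed
    have s2: "(\<Sum>e\<in>T. (if e \<in> Br then ?u + ?U else 0)) = (?u + ?U) * real (card (T \<inter> Br))"
    proof -
      have "(\<Sum>e\<in>T. (if e \<in> Br then ?u + ?U else 0)) = sum (\<lambda>_. ?u + ?U) (T \<inter> Br)"
        by (rule sum.inter_restrict[OF finT, symmetric])
      then show ?thesis by simp
    qed
    have B2: "real (card Bnd) \<ge> (real d - 1) * real (card S)"
      using B1 by (simp add: algebra_simps) (metis of_nat_add of_nat_le_iff of_nat_mult)
    have K2: "real (card (T \<inter> Br)) \<le> real dmax * real (card S)"
      using K1 by (metis of_nat_le_iff of_nat_mult)
    have "?u * real (card Bnd) \<ge> ?u * ((real d - 1) * real (card S))"
      using B2 upos by (intro mult_left_mono) auto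
    moreover have "(?u + ?U) * real (card (T \<inter> Br)) \<le> (?u + ?U) * (real dmax * real (card S))"
      using K2 upos Upos by (intro mult_left_mono) auto
    ultimately have "Hdiff d u \<omega> \<omega>0 \<ge> ((real d - 1) * ?u - real dmax * (?u + ?U)) * real (card S)"
      using H1 s1 s2 by (simp add: algebra_simps)
    then show "Hdiff d u \<omega> \<omega>0 \<ge> ((real d - 1) * ?u - real dmax * (?u + ?U)) * real (card (diff_set d \<omega> \<omega>0))"
      using S_def by simp
  qed
qed

end
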